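(* For simplices $\sigma,\tau$ on $\gamma_d$, we have $\sigma<_{d+1}\tau$ if and only if $\sigma$ and $\tau$ are $(d+2)$-interlacing in such a way that: when $d$ is even, there is such an interlacing sequence beginning with an element of $\sigma$ but none beginning with an element of $\tau$; when $d$ is odd, there is such an interlacing sequence beginning with an element of $\tau$ but none beginning with an element of $\sigma$.
   Context: $\gamma_d=\{(t,t^2,\dots,t^d):t\in\mathbb{R}\}$; points on it are ordered by parameter. A simplex on $\gamma_d$ is a subset $\sigma\subseteq\gamma_d$ with $|\sigma|\le d+1$, identified with $\mathrm{conv}(\sigma)$. Two simplices overlap in $\mathbb{R}^d$ if $\mathrm{conv}(\sigma)\cap\mathrm{conv}(\tau)\supsetneq\mathrm{conv}(\sigma\cap\tau)$. Subsets $\sigma,\tau$ are $k$-interlacing if there are elements $v_1<\dots<v_k$ of $\sigma\cup\tau$ alternating in membership, either $v_1\in\sigma,v_2\in\tau,v_3\in\sigma,\dots$ (beginning with $\sigma$) or $v_1\in\tau,v_2\in\sigma,\dots$ (beginning with $\tau$). For $\sigma=\{\gamma_d(t_1),\dots,\gamma_d(t_k)\}$ the lifting is $\hat\sigma=\{\gamma_{d+1}(t_i)\}$ and the height function $h_\sigma:\mathrm{conv}(\sigma)\to\mathbb{R}$ gives the last coordinate of the point of $\mathrm{conv}(\hat\sigma)$ projecting to $p$. The relation $\sigma<_{d+1}\tau$ holds iff $\sigma$ and $\tau$ overlap in $\mathbb{R}^d$ and $h_\sigma\le h_\tau$ on $\mathrm{conv}(\sigma)\cap\mathrm{conv}(\tau)$.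 *)

theory Defs
  imports Complex_Main
begin

text \<open>Points of R^d are represented as functions nat => real whose coordinates
  with index >= d are zero (coordinate i stores the (i+1)-st coordinate).
  A simplex on gamma_d is represented by its finite set of curve parameters.\<close>

definition gamma :: "nat \<Rightarrow> real \<Rightarrow> (nat \<Rightarrow> real)" where
  "gamma d t = (\<lambda>i. if i < d then t ^ Suc i else 0)"

definition cweights :: "real set \<Rightarrow> (real \<Rightarrow> real) \<Rightarrow> bool" where
  "cweights S w \<longleftrightarrow> (\<forall>t\<in>S. 0 \<le> w t) \<and> (\<Sum>t\<in>S. w t) = 1"

definition sconv :: "nat \<Rightarrow> real set \<Rightarrow> (nat \<Rightarrow> real) set" where
  "sconv d S = {p. \<exists>w. cweights S w \<and> p = (\<lambda>i. \<Sum>t\<in>S. w t * gamma d t i)}"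

definition simplex_on :: "nat \<Rightarrow> real set \<Rightarrow> bool" where
  "simplex_on d S \<longleftrightarrow> finite S \<and> card S \<le> d + 1"

definition overlap :: "nat \<Rightarrow> real set \<Rightarrow> real set \<Rightarrow> bool" where
  "overlap d S T \<longleftrightarrow> sconv d (S \<inter> T) \<subset> sconv d S \<inter> sconv d T"

text \<open>Height function: last (i.e. (d+1)-st) coordinate of the point of
  conv(lifted sigma) in R^(d+1) projecting to p.\<close>
definition height :: "nat \<Rightarrow> real set \<Rightarrow> (nat \<Rightarrow> real) \<Rightarrow> real" where
  "height d S p = (THE h. \<exists>w. cweights S w \<and>
      (\<lambda>i. \<Sum>t\<in>S. w t * gamma (d+1) t i) = (\<lambda>i. if i < d then p i else if i = d then h else 0))"

text \<open>below d S T is the relation S <_{d+1} T for simplices on gamma_d.\<close>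
definition below :: "nat \<Rightarrow> real set \<Rightarrow> real set \<Rightarrow> bool" where
  "below d S T \<longleftrightarrow> overlap d S T \<and>
     (\<forall>p\<in>sconv d S \<inter> sconv d T. height d S p \<le> height d T p)"

definition interlace_from :: "nat \<Rightarrow> real set \<Rightarrow> real set \<Rightarrow> bool" where
  "interlace_from k A B \<longleftrightarrow> (\<exists>v :: nat \<Rightarrow> real.
      (\<forall>i j. i < j \<and> j < k \<longrightarrow> v i < v j) \<and>
      (\<forall>i<k. v i \<in> (if even i then A else B)))"

end

theory Submission
  imports Defs "HOL-Computational_Algebra.Polynomial"
begin


lemma poly_sum_le:
  fixes p :: "real poly"
  assumes "degree p \<le> n"
  shows "poly p u = (\<Sum>k\<le>n. coeff p k * u^k)"
proof -
  have "poly p u = (\<Sum>k\<le>degree p. coeff p k * u^k)" by (rule poly_altdef)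
  also have "\<dots> = (\<Sum>k\<le>n. coeff p k * u^k)"
    by (rule sum.mono_neutral_left) (use assms in \<open>auto simp: coeff_eq_0\<close>)
  finally show ?thesis .
qed

lemma mom_poly:
  fixes e :: "real \<Rightarrow> real" and p :: "real poly"
  assumes "finite U" "\<forall>k<n. (\<Sum>u\<in>U. e u * u^k) = 0" "degree p \<le> n"
  shows "(\<Sum>u\<in>U. e u * poly p u) = coeff p n * (\<Sum>u\<in>U. e u * u^n)"
proof -
  have "(\<Sum>u\<in>U. e u * poly p u) = (\<Sum>u\<in>U. \<Sum>k\<le>n. coeff p k * (e u * u^k))"
    using poly_sum_le[OF assms(3)] by (simp add: sum_distrib_left mult_ac)
  also have "\<dots> = (\<Sum>k\<le>n. coeff p k * (\<Sum>u\<in>U. e u * u^k))"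
    by (subst sum.swap) (simp add: sum_distrib_left)
  also have "\<dots> = coeff p n * (\<Sum>u\<in>U. e u * u^n) + (\<Sum>k<n. coeff p k * (\<Sum>u\<in>U. e u * u^k))"
    by (simp add: lessThan_Suc_atMost[symmetric] add.commute)
  also have "(\<Sum>k<n. coeff p k * (\<Sum>u\<in>U. e u * u^k)) = 0"
    using assms(2) by simp
  finally show ?thesis by simp
qed

lemma vander_zero:
  fixes e :: "real \<Rightarrow> real"
  assumes "finite V" "card V \<le> n" "\<forall>k<n. (\<Sum>u\<in>V. e u * u^k) = 0" "s \<in> V"
  shows "e s = 0"
proof -
  define p where "p = (\<Prod>t\<in>V-{s}. [:-t,1:])"
  have "degree p \<le> (\<Sum>t\<in>V-{s}. degree [:-t,1::real:])"
    unfolding p_def using degree_prod_sum_le[of "V-{s}" "\<lambda>t. [:-t,1::real:]"] assms(1)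
    by (simp add: o_def)
  also have "\<dots> = card V - 1" using assms by (simp add: card_Diff_singleton)
  finally have dp: "degree p < n" using assms card_gt_0_iff[of V] by fastforce
  have "(\<Sum>u\<in>V. e u * poly p u) = coeff p n * (\<Sum>u\<in>V. e u * u^n)"
    by (rule mom_poly) (use assms dp in auto)
  also have "coeff p n = 0" using dp by (simp add: coeff_eq_0)
  finally have s0: "(\<Sum>u\<in>V. e u * poly p u) = 0" by simp
  have "(\<Sum>u\<in>V. e u * poly p u) = e s * poly p s + (\<Sum>u\<in>V-{s}. e u * poly p u)"
    using assms(1,4) by (simp add: sum.remove)
  also have "(\<Sum>u\<in>V-{s}. e u * poly p u) = 0"
    using assms(1) by (intro sum.neutral) (auto simp: p_def poly_prod)
  finally have "e s * poly p s = 0" using s0 by simp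
  moreover have "poly p s \<noteq> 0" using assms(1) by (simp add: p_def poly_prod)
  ultimately show ?thesis by simp
qed



lemma lin_prod_deg:
  fixes v :: "nat \<Rightarrow> real"
  assumes "finite J"
  shows "degree (\<Prod>j\<in>J. [:-v j, 1:]) = card J \<and> coeff (\<Prod>j\<in>J. [:-v j, 1:]) (card J) = 1"
proof -
  have d: "degree (\<Prod>j\<in>J. [:-v j, 1:]) = card J"
    by (subst degree_prod_eq_sum_degree) auto
  have "lead_coeff (\<Prod>j\<in>J. [:-v j, 1:]) = 1"
    by (subst lead_coeff_prod) auto
  with d show ?thesis by simp
qed

lemma divdiff:
  fixes v :: "nat \<Rightarrow> real"
  assumes inj: "inj_on v {..<n}" and kn: "k < n"
  shows "(\<Sum>i<n. (1 / (\<Prod>j\<in>{..<n}-{i}. (v i - v j))) * v i ^ k) = (if k = n - 1 then 1 else 0)"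
proof -
  define c where "c i = 1 / (\<Prod>j\<in>{..<n}-{i}. (v i - v j))" for i
  define l where "l i = (\<Prod>j\<in>{..<n}-{i}. [:-v j, 1:])" for i
  define L where "L = (\<Sum>i<n. smult (c i * v i ^ k) (l i))"
  have cardi: "i < n \<Longrightarrow> card ({..<n}-{i}) = n - 1" for i by simp
  have dl: "i < n \<Longrightarrow> degree (l i) = n - 1 \<and> coeff (l i) (n-1) = 1" for i
    using lin_prod_deg[of "{..<n}-{i}" v] cardi[of i] unfolding l_def by simp
  have dL: "degree L \<le> n - 1"
    unfolding L_def
    by (rule degree_sum_le) (auto intro: order.trans[OF degree_smult_le] simp: dl)
  have pv: "poly L (v m) = v m ^ k" if m: "m < n" for m
  proof -
    have "poly L (v m) = (\<Sum>i<n. c i * v i ^ k * poly (l i) (v m))"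
      by (simp add: L_def poly_sum)
    also have "\<dots> = c m * v m ^ k * poly (l m) (v m) + (\<Sum>i\<in>{..<n}-{m}. c i * v i ^ k * poly (l i) (v m))"
      using m by (simp add: sum.remove)
    also have "(\<Sum>i\<in>{..<n}-{m}. c i * v i ^ k * poly (l i) (v m)) = 0"
    proof (intro sum.neutral ballI)
      fix i assume "i \<in> {..<n}-{m}"
      then have "m \<in> {..<n}-{i}" using m by auto
      then have "poly (l i) (v m) = 0"
        unfolding l_def poly_prod
        by (intro prod_zero) auto
      then show "c i * v i ^ k * poly (l i) (v m) = 0" by simp
    qed
    also have "poly (l m) (v m) = (\<Prod>j\<in>{..<n}-{m}. (v m - v j))"
      by (simp add: l_def poly_prod)
    also have "(\<Prod>j\<in>{..<n}-{m}. (v m - v j)) \<noteq> 0"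
      using inj m by (auto simp: inj_on_def)
    then have "c m * v m ^ k * (\<Prod>j\<in>{..<n}-{m}. (v m - v j)) = v m ^ k"
      by (simp add: c_def)
    finally show ?thesis by simp
  qed
  have "L = monom 1 k"
  proof (rule poly_eqI_degree[where A="v ` {..<n}"])
    fix x assume "x \<in> v ` {..<n}"
    then show "poly L x = poly (monom 1 k) x" using pv by (auto simp: poly_monom)
  next
    have "card (v ` {..<n}) = n" using inj by (simp add: card_image)
    then show "degree L < card (v ` {..<n})" "degree (monom (1::real) k) < card (v ` {..<n})"
      using dL kn by (auto simp: degree_monom_eq)
  qed
  then have "coeff L (n-1) = coeff (monom (1::real) k) (n-1)" by simp
  moreover have "coeff L (n-1) = (\<Sum>i<n. c i * v i ^ k)"
    unfolding L_def coeff_sum using dl by simp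
  ultimately show ?thesis by (auto simp: c_def coeff_monom)
qed

lemma neg_prod_sign:
  fixes f :: "nat \<Rightarrow> real"
  shows "(\<forall>j<i. f j < 0) \<Longrightarrow> (-1)^i * (\<Prod>j<i. f j) > 0"
proof (induction i)
  case 0 then show ?case by simp
next
  case (Suc i)
  then have "(-1)^i * (\<Prod>j<i. f j) > 0" by simp
  moreover have "f i < 0" using Suc by simp
  ultimately have "((-1)^i * (\<Prod>j<i. f j)) * (- f i) > 0"
    by (metis mult_pos_pos neg_0_less_iff_less)
  then show ?case by (simp add: algebra_simps)
qed

lemma divdiff_sign:
  fixes v :: "nat \<Rightarrow> real"
  assumes dec: "\<forall>i j. i < j \<and> j < n \<longrightarrow> v j < v i" and i: "i < n"
  shows "(-1)^i * (1 / (\<Prod>j\<in>{..<n}-{i}. (v i - v j))) > 0"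
proof -
  have split: "{..<n}-{i} = {..<i} \<union> {i<..<n}" using i by auto
  have "(\<Prod>j\<in>{..<n}-{i}. (v i - v j)) = (\<Prod>j<i. (v i - v j)) * (\<Prod>j\<in>{i<..<n}. (v i - v j))"
    unfolding split by (rule prod.union_disjoint) auto
  moreover have "(-1)^i * (\<Prod>j<i. (v i - v j)) > 0"
    by (rule neg_prod_sign) (use dec i in auto)
  moreover have "(\<Prod>j\<in>{i<..<n}. (v i - v j)) > 0"
    by (rule prod_pos) (use dec in auto)
  ultimately have "(-1)^i * (\<Prod>j\<in>{..<n}-{i}. (v i - v j)) > 0"
    by (simp add: mult.assoc[symmetric])
  then show ?thesis
    by (cases "even i") (auto simp: zero_less_mult_iff)
qed



definition alt :: "nat \<Rightarrow> real set \<Rightarrow> real set \<Rightarrow> bool" where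
  "alt k A B \<longleftrightarrow> (\<exists>v::nat\<Rightarrow>real. (\<forall>i j. i < j \<and> j < k \<longrightarrow> v j < v i) \<and>
      (\<forall>i<k. v i \<in> (if even i then A else B)))"

lemma exists_below:
  fixes B :: "real set" assumes "finite B" shows "\<exists>r. \<forall>b\<in>B. r < b"
proof -
  have "\<forall>b\<in>B. - (\<Sum>x\<in>B. \<bar>x\<bar>) - 1 < b"
  proof
    fix b assume "b \<in> B"
    then have "\<bar>b\<bar> \<le> (\<Sum>x\<in>B. \<bar>x\<bar>)" using assms by (intro member_le_sum) auto
    then show "- (\<Sum>x\<in>B. \<bar>x\<bar>) - 1 < b" by linarith
  qed
  then show ?thesis by blast
qed

lemma exists_between:
  fixes F :: "real set" assumes "finite F" "\<forall>b\<in>F. a < b" shows "\<exists>r>a. \<forall>b\<in>F. r < b"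
proof (cases "F = {}")
  case True then show ?thesis by (intro exI[of _ "a+1"]) auto
next
  case False
  then have "Min F \<in> F" using assms by simp
  then have "a < Min F" using assms by auto
  moreover have "\<forall>b\<in>F. Min F \<le> b" using assms by simp
  ultimately show ?thesis by (intro exI[of _ "(a + Min F)/2"]) force
qed

lemma lin_times:
  fixes Q :: "real poly"
  assumes "degree Q = m" "coeff Q m = 1"
  shows "degree ([:-r,1:] * Q) = Suc m \<and> coeff ([:-r,1:] * Q) (Suc m) = 1"
proof -
  have "Q \<noteq> 0" using assms by auto
  then have d: "degree ([:-r,1:] * Q) = Suc m" using assms by (subst degree_mult_eq) auto
  have "lead_coeff ([:-r,1:] * Q) = lead_coeff [:-r,1:] * lead_coeff Q" by (rule lead_coeff_mult)
  then have "lead_coeff ([:-r,1:] * Q) = 1" using assms by simp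
  with d show ?thesis by simp
qed

lemma greedy:
  "finite A \<Longrightarrow> finite B \<Longrightarrow> \<not> alt (Suc m) A B \<Longrightarrow>
   \<exists>Q::real poly. degree Q = m \<and> coeff Q m = 1 \<and> (\<forall>u\<in>A\<inter>B. poly Q u = 0) \<and>
     (\<forall>u\<in>A-B. poly Q u < 0) \<and> (\<forall>u\<in>B-A. poly Q u > 0)"
proof (induction m arbitrary: A B)
  case 0
  have "A = {}"
  proof (rule ccontr)
    assume "A \<noteq> {}" then obtain a where "a \<in> A" by blast
    then have "alt (Suc 0) A B" unfolding alt_def by (intro exI[of _ "\<lambda>_. a"]) auto
    with 0 show False by simp
  qed
  then show ?case by (intro exI[of _ 1]) auto
next
  case (Suc m)
  show ?case
  proof (cases "A = {}")
    case True
    have "\<not> alt (Suc m) {} B" unfolding alt_def by auto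
    then obtain Q where Q: "degree Q = m" "coeff Q m = 1" "\<forall>u\<in>B. poly Q u > 0"
      using Suc.IH[of "{}" B] Suc.prems by auto
    obtain r where r: "\<forall>b\<in>B. r < b" using exists_below Suc.prems by blast
    show ?thesis using True Q r lin_times[OF Q(1,2), of r]
      by (intro exI[of _ "[:-r,1:] * Q"]) auto
  next
    case False
    define a where "a = Max A"
    have aA: "a \<in> A" using False Suc.prems by (simp add: a_def)
    have lea: "\<forall>u\<in>A. u \<le> a" using Suc.prems by (simp add: a_def)
    define A1 where "A1 = {b\<in>B. b < a}"
    define B1 where "B1 = A \<union> {b\<in>B. a < b}"
    have nalt: "\<not> alt (Suc m) A1 B1"
    proof
      assume "alt (Suc m) A1 B1"
      then obtain v where dec: "\<forall>i j. i < j \<and> j < Suc m \<longrightarrow> v j < v i"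
        and mem: "\<forall>i<Suc m. v i \<in> (if even i then A1 else B1)" unfolding alt_def by blast
      have v0: "v 0 < a" using mem A1_def by auto
      have vle: "i < Suc m \<Longrightarrow> v i \<le> v 0" for i using dec by (cases i) fastforce+
      define w where "w i = (if i = 0 then a else v (i - 1))" for i
      have "alt (Suc (Suc m)) A B" unfolding alt_def
      proof (intro exI[of _ w] conjI allI impI)
        fix i j assume ij: "i < j \<and> j < Suc (Suc m)"
        then have j1: "j - 1 < Suc m" "j \<noteq> 0" by auto
        show "w j < w i"
        proof (cases "i = 0")
          case True
          have "v (j-1) < a" using vle[OF j1(1)] v0 by linarith
          then show ?thesis using True j1 by (simp add: w_def)
        next
          case False
          then have "i - 1 < j - 1" using ij by auto
          then have "v (j-1) < v (i-1)" using dec j1 by blast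
          then show ?thesis using j1 False by (simp add: w_def)
        qed
      next
        fix i assume i: "i < Suc (Suc m)"
        show "w i \<in> (if even i then A else B)"
        proof (cases i)
          case 0 then show ?thesis using aA by (simp add: w_def)
        next
          case (Suc i')
          then have vi: "v i' \<in> (if even i' then A1 else B1)" using mem i by auto
          have "v i' < a" using vle[of i'] v0 i Suc by auto
          then show ?thesis using vi Suc by (auto simp: w_def A1_def B1_def)
        qed
      qed
      with Suc.prems show False by simp
    qed
    have fA1: "finite A1" using Suc.prems(2) by (simp add: A1_def)
    have fB1: "finite B1" using Suc.prems(1,2) by (simp add: B1_def)
    from Suc.IH[OF fA1 fB1 nalt]
    obtain Q where Q: "degree Q = m" "coeff Q m = 1" "\<forall>u\<in>A1\<inter>B1. poly Q u = 0"
      "\<forall>u\<in>A1-B1. poly Q u < 0" "\<forall>u\<in>B1-A1. poly Q u > 0"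
      by blast
    have fB2: "finite {b\<in>B. a < b}" using Suc.prems(2) by simp
    obtain r0 where r0: "r0 > a" "\<forall>b\<in>{b\<in>B. a < b}. r0 < b"
      using exists_between[OF fB2, of a] by blast
    define r where "r = (if a \<in> B then a else r0)"
    have r: "a \<le> r" "a \<in> B \<Longrightarrow> r = a" "a \<notin> B \<Longrightarrow> a < r" "\<forall>b\<in>B. a < b \<longrightarrow> r < b"
      using r0 by (auto simp: r_def)
    define Q2 where "Q2 = [:-r,1:] * Q"
    have pq: "poly Q2 u = (u - r) * poly Q u" for u by (simp add: Q2_def algebra_simps)
    show ?thesis
    proof (intro exI[of _ Q2] conjI ballI)
      show "degree Q2 = Suc m" "coeff Q2 (Suc m) = 1" using lin_times[OF Q(1,2)] by (auto simp: Q2_def)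
    next
      fix u assume u: "u \<in> A \<inter> B"
      show "poly Q2 u = 0"
      proof (cases "u = a")
        case True then show ?thesis using u r by (simp add: pq)
      next
        case False
        then have "u \<in> A1 \<inter> B1" using u lea by (force simp: A1_def B1_def)
        then show ?thesis using Q by (simp add: pq)
      qed
    next
      fix u assume u: "u \<in> A - B"
      then have "u \<in> B1 - A1" by (auto simp: A1_def B1_def)
      then have "poly Q u > 0" using Q by auto
      moreover have "u - r < 0"
      proof (cases "u = a")
        case True then show ?thesis using u r by auto
      next
        case False then show ?thesis using u r lea by force
      qed
      ultimately show "poly Q2 u < 0" by (simp add: pq mult_neg_pos)
    next
      fix u assume u: "u \<in> B - A"
      have "u \<noteq> a" using u aA by auto
      show "poly Q2 u > 0"
      proof (cases "u < a")
        case True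
        then have "u \<in> A1 - B1" using u by (auto simp: A1_def B1_def)
        then have "poly Q u < 0" using Q by auto
        moreover have "u - r < 0" using True r by auto
        ultimately show ?thesis by (simp add: pq mult_neg_neg)
      next
        case False
        then have "a < u" using \<open>u \<noteq> a\<close> by auto
        then have "u \<in> B1 - A1" using u by (auto simp: A1_def B1_def)
        then have "poly Q u > 0" using Q by auto
        moreover have "u - r > 0" using \<open>a < u\<close> r u by auto
        ultimately show ?thesis by (simp add: pq)
      qed
    qed
  qed
qed



lemma restrict_sum:
  fixes f g :: "real \<Rightarrow> real"
  assumes "finite S"
  shows "(\<Sum>u\<in>S. (if u \<in> T then f u else 0) * g u) = (\<Sum>u\<in>S\<inter>T. f u * g u)"
proof -
  have "(\<Sum>u\<in>S. (if u \<in> T then f u else 0) * g u) = (\<Sum>u\<in>S. if u \<in> T then f u * g u else 0)"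
    by (rule sum.cong) auto
  then show ?thesis using sum.inter_restrict[OF assms, of "\<lambda>u. f u * g u" T] by simp
qed

lemma cons:
  assumes X: "simplex_on d X" and Y: "simplex_on d Y" and al: "alt (d+2) X Y"
  shows "\<exists>a b. cweights X a \<and> cweights Y b \<and>
    (\<forall>i<d. (\<Sum>t\<in>X. a t * t ^ Suc i) = (\<Sum>t\<in>Y. b t * t ^ Suc i)) \<and>
    (\<Sum>t\<in>X. a t * t ^ (d+1)) > (\<Sum>t\<in>Y. b t * t ^ (d+1)) \<and>
    (\<exists>u\<in>Y. b u > 0 \<and> a u = 0)"
proof -
  define n where "n = d + 2"
  obtain v where dec: "\<forall>i j. i < j \<and> j < n \<longrightarrow> v j < v i"
    and mem: "\<forall>i<n. v i \<in> (if even i then X else Y)"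
    using al unfolding alt_def n_def by blast
  have inj: "inj_on v {..<n}"
  proof (rule inj_onI)
    fix x y assume xy: "x \<in> {..<n}" "y \<in> {..<n}" "v x = v y"
    show "x = y"
    proof (rule ccontr)
      assume "x \<noteq> y"
      then have "x < y \<or> y < x" by arith
      then show False
      proof
        assume "x < y" then have "v y < v x" using dec xy(2) by auto
        then show False using xy(3) by simp
      next
        assume "y < x" then have "v x < v y" using dec xy(1) by auto
        then show False using xy(3) by simp
      qed
    qed
  qed
  define c where "c i = 1 / (\<Prod>j\<in>{..<n}-{i}. (v i - v j))" for i
  have mom: "k < n \<Longrightarrow> (\<Sum>i<n. c i * v i ^ k) = (if k = n - 1 then 1 else 0)" for k
    using divdiff[OF inj] unfolding c_def by blast
  have sg: "i < n \<Longrightarrow> (-1)^i * c i > 0" for i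
    using divdiff_sign[OF dec] unfolding c_def by blast
  have cE: "i < n \<Longrightarrow> even i \<Longrightarrow> c i > 0" for i using sg[of i] by simp
  have cO: "i < n \<Longrightarrow> odd i \<Longrightarrow> c i < 0" for i using sg[of i] by simp
  define E where "E = {i. i < n \<and> even i}"
  define Od where "Od = {i. i < n \<and> odd i}"
  have fE: "finite E" and fO: "finite Od" by (auto simp: E_def Od_def)
  have EO: "{..<n} = E \<union> Od" "E \<inter> Od = {}" by (auto simp: E_def Od_def)
  have sumEO: "(\<Sum>i<n. f i) = (\<Sum>i\<in>E. f i) + (\<Sum>i\<in>Od. f i)" for f :: "nat \<Rightarrow> real"
    unfolding EO(1) by (rule sum.union_disjoint) (use fE fO EO in auto)
  define Z where "Z = (\<Sum>i\<in>E. c i)"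
  have "0 \<in> E" by (simp add: E_def n_def)
  have Zpos: "Z > 0" unfolding Z_def
    by (rule sum_pos2[OF fE \<open>0 \<in> E\<close>]) (use cE in \<open>auto simp: E_def n_def less_imp_le\<close>)
  have sum0: "(\<Sum>i\<in>E. c i) + (\<Sum>i\<in>Od. c i) = 0"
    using mom[of 0] sumEO[of c] by (simp add: n_def)
  define a where "a u = (\<Sum>i\<in>{i\<in>E. v i = u}. c i) / Z" for u
  define b where "b u = (\<Sum>i\<in>{i\<in>Od. v i = u}. - c i) / Z" for u
  have vE: "v ` E \<subseteq> X" using mem by (auto simp: E_def)
  have vO: "v ` Od \<subseteq> Y" using mem by (auto simp: Od_def)
  have fX: "finite X" using X by (simp add: simplex_on_def)
  have fY: "finite Y" using Y by (simp add: simplex_on_def)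
  have asum: "(\<Sum>u\<in>X. a u * g u) = (\<Sum>i\<in>E. c i * g (v i)) / Z" for g :: "real \<Rightarrow> real"
  proof -
    have "(\<Sum>u\<in>X. a u * g u) = (\<Sum>u\<in>X. \<Sum>i\<in>{i\<in>E. v i = u}. c i * g (v i)) / Z"
      by (simp add: a_def sum_divide_distrib sum_distrib_right)
    also have "(\<Sum>u\<in>X. \<Sum>i\<in>{i\<in>E. v i = u}. c i * g (v i)) = (\<Sum>i\<in>E. c i * g (v i))"
      by (rule sum.group[OF fE fX vE])
    finally show ?thesis .
  qed
  have bsum: "(\<Sum>u\<in>Y. b u * g u) = - (\<Sum>i\<in>Od. c i * g (v i)) / Z" for g :: "real \<Rightarrow> real"
  proof -
    have "(\<Sum>u\<in>Y. b u * g u) = (\<Sum>u\<in>Y. \<Sum>i\<in>{i\<in>Od. v i = u}. - c i * g (v i)) / Z"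
      by (simp add: b_def sum_divide_distrib sum_distrib_right)
    also have "(\<Sum>u\<in>Y. \<Sum>i\<in>{i\<in>Od. v i = u}. - c i * g (v i)) = (\<Sum>i\<in>Od. - c i * g (v i))"
      by (rule sum.group[OF fO fY vO])
    finally show ?thesis by (simp add: sum_negf)
  qed
  have diff: "k < n \<Longrightarrow> (\<Sum>u\<in>X. a u * u ^ k) - (\<Sum>u\<in>Y. b u * u ^ k) = (if k = n - 1 then 1 else 0) / Z" for k
    using asum[of "\<lambda>u. u ^ k"] bsum[of "\<lambda>u. u ^ k"] mom[of k] sumEO[of "\<lambda>i. c i * v i ^ k"]
    by (simp add: diff_divide_distrib[symmetric] add_divide_distrib[symmetric])
  have anneg: "a u \<ge> 0" for u
    unfolding a_def using Zpos cE by (intro divide_nonneg_pos sum_nonneg) (auto simp: E_def less_imp_le)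
  have bnneg: "b u \<ge> 0" for u
    unfolding b_def using Zpos cO by (intro divide_nonneg_pos sum_nonneg) (auto simp: Od_def less_imp_le)
  have cwa: "cweights X a"
    unfolding cweights_def using anneg asum[of "\<lambda>_. 1"] Zpos by (simp add: Z_def)
  have sOd: "(\<Sum>i\<in>Od. c i) = - Z" using sum0 unfolding Z_def by linarith
  have cwb: "cweights Y b"
    unfolding cweights_def using bnneg bsum[of "\<lambda>_. 1"] Zpos by (simp add: sOd)
  have mi: "\<forall>i<d. (\<Sum>t\<in>X. a t * t ^ Suc i) = (\<Sum>t\<in>Y. b t * t ^ Suc i)"
  proof (intro allI impI)
    fix i assume "i < d"
    then have "Suc i < n" "Suc i \<noteq> n - 1" by (auto simp: n_def)
    then show "(\<Sum>t\<in>X. a t * t ^ Suc i) = (\<Sum>t\<in>Y. b t * t ^ Suc i)"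
      using diff[of "Suc i"] by (simp del: power_Suc)
  qed
  have top: "(\<Sum>t\<in>X. a t * t ^ (d+1)) > (\<Sum>t\<in>Y. b t * t ^ (d+1))"
  proof -
    have "(\<Sum>t\<in>X. a t * t ^ (d+1)) - (\<Sum>t\<in>Y. b t * t ^ (d+1)) = 1 / Z"
      using diff[of "d+1"] by (simp add: n_def del: power_Suc)
    moreover have "1 / Z > 0" using Zpos by simp
    ultimately show ?thesis by linarith
  qed
  have "1 \<in> Od" by (simp add: Od_def n_def)
  have s1: "{i\<in>Od. v i = v 1} = {1}"
    using inj \<open>1 \<in> Od\<close> by (auto simp: Od_def inj_on_def)
  have s2: "{i\<in>E. v i = v 1} = {}"
  proof -
    { fix i assume i: "i \<in> E" "v i = v 1"
      then have "i = 1" using inj by (auto simp: E_def inj_on_def n_def)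
      with i have False by (simp add: E_def) }
    then show ?thesis by blast
  qed
  have "b (v 1) > 0" using s1 cO[of 1] Zpos by (simp add: b_def n_def divide_neg_pos)
  moreover have "a (v 1) = 0" unfolding a_def s2 by simp
  moreover have "v 1 \<in> Y" using mem[rule_format, of 1] by (simp add: n_def)
  ultimately show ?thesis using cwa cwb mi top by blast
qed



definition G :: "nat \<Rightarrow> real set \<Rightarrow> (real \<Rightarrow> real) \<Rightarrow> (nat \<Rightarrow> real)" where
  "G d S w = (\<lambda>i. \<Sum>t\<in>S. w t * gamma d t i)"

lemma sconv_iff: "p \<in> sconv d S \<longleftrightarrow> (\<exists>w. cweights S w \<and> p = G d S w)"
  by (simp add: sconv_def G_def)

lemma coordG: "i < d \<Longrightarrow> G d S w i = (\<Sum>t\<in>S. w t * t ^ Suc i)"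
  by (simp add: G_def gamma_def)

lemma uniq_mom:
  assumes S: "simplex_on d S" and w1: "cweights S w1" and w2: "cweights S w2"
    and m: "\<forall>i<d. (\<Sum>t\<in>S. w1 t * t ^ Suc i) = (\<Sum>t\<in>S. w2 t * t ^ Suc i)"
  shows "\<forall>t\<in>S. w1 t = w2 t"
proof
  fix s assume s: "s \<in> S"
  have fS: "finite S" "card S \<le> d + 1" using S by (auto simp: simplex_on_def)
  have "\<forall>k<d+1. (\<Sum>u\<in>S. (w1 u - w2 u) * u ^ k) = 0"
  proof (intro allI impI)
    fix k assume k: "k < d + 1"
    show "(\<Sum>u\<in>S. (w1 u - w2 u) * u ^ k) = 0"
    proof (cases k)
      case 0 then show ?thesis using w1 w2 by (simp add: cweights_def sum_subtractf)
    next
      case (Suc i)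
      then have "i < d" using k by simp
      then show ?thesis using m Suc by (simp add: left_diff_distrib sum_subtractf del: power_Suc)
    qed
  qed
  then have "w1 s - w2 s = 0" by (intro vander_zero[OF fS(1) fS(2) _ s])
  then show "w1 s = w2 s" by simp
qed

lemma uniqG:
  assumes S: "simplex_on d S" and w1: "cweights S w1" and w2: "cweights S w2"
    and g: "G d S w1 = G d S w2"
  shows "\<forall>t\<in>S. w1 t = w2 t"
proof (rule uniq_mom[OF S w1 w2], intro allI impI)
  fix i assume "i < d"
  then show "(\<Sum>t\<in>S. w1 t * t ^ Suc i) = (\<Sum>t\<in>S. w2 t * t ^ Suc i)"
    using fun_cong[OF g, of i] coordG[of i d S] by simp
qed

lemma G_eqI:
  assumes "\<forall>i<d. (\<Sum>t\<in>S. a t * t ^ Suc i) = (\<Sum>t\<in>T. b t * t ^ Suc i)"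
  shows "G d S a = G d T b"
proof
  fix i show "G d S a i = G d T b i"
  proof (cases "i < d")
    case True
    then have "(\<Sum>t\<in>S. a t * t ^ Suc i) = (\<Sum>t\<in>T. b t * t ^ Suc i)" using assms by blast
    then show ?thesis using True coordG[of i d S a] coordG[of i d T b] by (simp del: power_Suc)
  next
    case False then show ?thesis by (simp add: G_def gamma_def)
  qed
qed

lemma G_mom:
  assumes "G d S a = G d T b"
  shows "\<forall>i<d. (\<Sum>t\<in>S. a t * t ^ Suc i) = (\<Sum>t\<in>T. b t * t ^ Suc i)"
proof (intro allI impI)
  fix i assume "i < d"
  then show "(\<Sum>t\<in>S. a t * t ^ Suc i) = (\<Sum>t\<in>T. b t * t ^ Suc i)"
    using fun_cong[OF assms, of i] coordG[of i d S a] coordG[of i d T b] by (simp del: power_Suc)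
qed

lemma height_eq:
  assumes S: "simplex_on d S" and w: "cweights S w"
  shows "height d S (G d S w) = (\<Sum>t\<in>S. w t * t ^ (d+1))"
  unfolding height_def
proof (rule the_equality)
  show "\<exists>w'. cweights S w' \<and> (\<lambda>i. \<Sum>t\<in>S. w' t * gamma (d + 1) t i) =
      (\<lambda>i. if i < d then G d S w i else if i = d then (\<Sum>t\<in>S. w t * t ^ (d+1)) else 0)"
    using w by (intro exI[of _ w]) (auto simp: G_def gamma_def)
next
  fix h assume "\<exists>w'. cweights S w' \<and> (\<lambda>i. \<Sum>t\<in>S. w' t * gamma (d + 1) t i) =
      (\<lambda>i. if i < d then G d S w i else if i = d then h else 0)"
  then obtain w' where w': "cweights S w'" and e: "(\<lambda>i. \<Sum>t\<in>S. w' t * gamma (d + 1) t i) =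
      (\<lambda>i. if i < d then G d S w i else if i = d then h else 0)" by blast
  have "\<forall>i<d. (\<Sum>t\<in>S. w' t * t ^ Suc i) = (\<Sum>t\<in>S. w t * t ^ Suc i)"
  proof (intro allI impI)
    fix i assume i: "i < d"
    have "(\<Sum>t\<in>S. w' t * gamma (d + 1) t i) = G d S w i" using fun_cong[OF e, of i] i by simp
    then show "(\<Sum>t\<in>S. w' t * t ^ Suc i) = (\<Sum>t\<in>S. w t * t ^ Suc i)"
      using i coordG[of i d S w] by (simp add: gamma_def del: power_Suc)
  qed
  then have eq: "\<forall>t\<in>S. w' t = w t" using uniq_mom[OF S w' w] by blast
  have "h = (\<Sum>t\<in>S. w' t * gamma (d + 1) t d)" using fun_cong[OF e, of d] by simp
  also have "\<dots> = (\<Sum>t\<in>S. w t * t ^ (d+1))" using eq by (simp add: gamma_def)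
  finally show "h = (\<Sum>t\<in>S. w t * t ^ (d+1))" .
qed

lemma ext_weights:
  assumes "finite S" "cweights (S \<inter> T) w"
  shows "cweights S (\<lambda>x. if x \<in> T then w x else 0) \<and> G d S (\<lambda>x. if x \<in> T then w x else 0) = G d (S \<inter> T) w"
proof -
  have s1: "(\<Sum>u\<in>S. (if u \<in> T then w u else 0) * g u) = (\<Sum>u\<in>S\<inter>T. w u * g u)" for g
    by (rule restrict_sum[OF assms(1)])
  have "(\<Sum>u\<in>S. (if u \<in> T then w u else 0)) = (\<Sum>u\<in>S\<inter>T. w u)"
    using s1[of "\<lambda>_. 1"] by simp
  moreover have "\<forall>x\<in>S. 0 \<le> (if x \<in> T then w x else 0)" using assms(2) by (simp add: cweights_def)
  ultimately have "cweights S (\<lambda>x. if x \<in> T then w x else 0)"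
    using assms(2) by (simp add: cweights_def)
  moreover have "G d S (\<lambda>x. if x \<in> T then w x else 0) = G d (S \<inter> T) w"
    unfolding G_def by (rule ext, rule s1)
  ultimately show ?thesis by blast
qed

lemma sconv_sub: assumes "finite S" shows "sconv d (S \<inter> T) \<subseteq> sconv d S"
proof
  fix p assume "p \<in> sconv d (S \<inter> T)"
  then obtain w where w: "cweights (S \<inter> T) w" "p = G d (S \<inter> T) w" by (auto simp: sconv_iff)
  from ext_weights[OF assms w(1), of d] w(2) show "p \<in> sconv d S" unfolding sconv_iff by metis
qed

lemma key:
  fixes Q :: "real poly"
  assumes S: "simplex_on d S" and T: "simplex_on d T" and a: "cweights S a" and b: "cweights T b"
    and m: "\<forall>i<d. (\<Sum>t\<in>S. a t * t ^ Suc i) = (\<Sum>t\<in>T. b t * t ^ Suc i)"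
    and Q: "degree Q = d + 1" "coeff Q (d+1) = 1"
  shows "(\<Sum>u\<in>S\<union>T. ((if u \<in> S then a u else 0) - (if u \<in> T then b u else 0)) * poly Q u)
     = (\<Sum>t\<in>S. a t * t ^ (d+1)) - (\<Sum>t\<in>T. b t * t ^ (d+1))"
proof -
  have fS: "finite S" and fT: "finite T" using S T by (auto simp: simplex_on_def)
  have fU: "finite (S \<union> T)" using fS fT by simp
  define c where "c u = (if u \<in> S then a u else 0) - (if u \<in> T then b u else 0)" for u
  have cs: "(\<Sum>u\<in>S\<union>T. c u * g u) = (\<Sum>t\<in>S. a t * g t) - (\<Sum>t\<in>T. b t * g t)" for g
  proof -
    have "(\<Sum>u\<in>S\<union>T. c u * g u) = (\<Sum>u\<in>S\<union>T. (if u \<in> S then a u else 0) * g u) - (\<Sum>u\<in>S\<union>T. (if u \<in> T then b u else 0) * g u)"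
      by (simp add: c_def left_diff_distrib sum_subtractf)
    also have "(\<Sum>u\<in>S\<union>T. (if u \<in> S then a u else 0) * g u) = (\<Sum>t\<in>S. a t * g t)"
      using restrict_sum[OF fU, of S a g] by (simp add: Int_absorb1)
    also have "(\<Sum>u\<in>S\<union>T. (if u \<in> T then b u else 0) * g u) = (\<Sum>t\<in>T. b t * g t)"
      using restrict_sum[OF fU, of T b g] by (simp add: Int_absorb1)
    finally show ?thesis .
  qed
  have "\<forall>k<d+1. (\<Sum>u\<in>S\<union>T. c u * u ^ k) = 0"
  proof (intro allI impI)
    fix k assume k: "k < d + 1"
    show "(\<Sum>u\<in>S\<union>T. c u * u ^ k) = 0"
    proof (cases k)
      case 0 then show ?thesis using a b cs[of "\<lambda>_. 1"] by (simp add: cweights_def)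
    next
      case (Suc i)
      then have "i < d" using k by simp
      then show ?thesis using m Suc cs[of "\<lambda>u. u ^ k"] by (simp del: power_Suc)
    qed
  qed
  then have "(\<Sum>u\<in>S\<union>T. c u * poly Q u) = coeff Q (d+1) * (\<Sum>u\<in>S\<union>T. c u * u ^ (d+1))"
    by (intro mom_poly[OF fU]) (use Q in auto)
  then show ?thesis using Q cs[of "\<lambda>u. u ^ (d+1)"] unfolding c_def by simp
qed



lemma main_alt:
  assumes S: "simplex_on d S" and T: "simplex_on d T"
  shows "below d S T \<longleftrightarrow> alt (d+2) T S \<and> \<not> alt (d+2) S T"
proof -
  have fS: "finite S" and fT: "finite T" using S T by (auto simp: simplex_on_def)
  have sub: "sconv d (S \<inter> T) \<subseteq> sconv d S \<inter> sconv d T"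
    using sconv_sub[OF fS, of d T] sconv_sub[OF fT, of d S] by (auto simp: Int_commute)
  show ?thesis
  proof
    assume bl: "below d S T"
    then have ov: "overlap d S T" and hl: "\<forall>p\<in>sconv d S \<inter> sconv d T. height d S p \<le> height d T p"
      by (auto simp: below_def)
    have n1: "\<not> alt (d+2) S T"
    proof
      assume "alt (d+2) S T"
      then obtain a b where a: "cweights S a" and b: "cweights T b"
        and m: "\<forall>i<d. (\<Sum>t\<in>S. a t * t ^ Suc i) = (\<Sum>t\<in>T. b t * t ^ Suc i)"
        and top: "(\<Sum>t\<in>S. a t * t ^ (d+1)) > (\<Sum>t\<in>T. b t * t ^ (d+1))"
        using cons[OF S T] by blast
      have g: "G d S a = G d T b" by (rule G_eqI[OF m])
      have "G d S a \<in> sconv d S \<inter> sconv d T" using a b g unfolding Int_iff sconv_iff by blast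
      then have "height d S (G d S a) \<le> height d T (G d T b)" using hl g by simp
      then show False using height_eq[OF S a] height_eq[OF T b] top by simp
    qed
    have n2: "alt (d+2) T S"
    proof (rule ccontr)
      assume "\<not> alt (d+2) T S"
      then have "\<not> alt (Suc (d+1)) T S" by simp
      from greedy[OF fT fS this] obtain Q :: "real poly" where Q: "degree Q = d+1" "coeff Q (d+1) = 1"
        "\<forall>u\<in>T\<inter>S. poly Q u = 0" "\<forall>u\<in>T-S. poly Q u < 0" "\<forall>u\<in>S-T. poly Q u > 0" by blast
      from ov sub obtain p where p: "p \<in> sconv d S \<inter> sconv d T" "p \<notin> sconv d (S \<inter> T)"
        unfolding overlap_def by blast
      from p(1) obtain a b where a: "cweights S a" "p = G d S a" and b: "cweights T b" "p = G d T b"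
        unfolding Int_iff sconv_iff by blast
      have m: "\<forall>i<d. (\<Sum>t\<in>S. a t * t ^ Suc i) = (\<Sum>t\<in>T. b t * t ^ Suc i)"
        using G_mom a b by metis
      define c where "c u = (if u \<in> S then a u else 0) - (if u \<in> T then b u else 0)" for u
      have ks: "(\<Sum>u\<in>S\<union>T. c u * poly Q u) = height d S p - height d T p"
        using key[OF S T a(1) b(1) m Q(1,2)] height_eq[OF S a(1)] height_eq[OF T b(1)] a(2) b(2)
        unfolding c_def by simp
      have "height d S p \<le> height d T p" using hl p by blast
      then have le: "(\<Sum>u\<in>S\<union>T. c u * poly Q u) \<le> 0" using ks by simp
      have nn: "\<forall>u\<in>S\<union>T. c u * poly Q u \<ge> 0"
      proof
        fix u assume u: "u \<in> S \<union> T"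
        consider "u \<in> S \<inter> T" | "u \<in> S - T" | "u \<in> T - S" using u by blast
        then show "c u * poly Q u \<ge> 0"
        proof cases
          case 1 then show ?thesis using Q by auto
        next
          case 2 then have "a u \<ge> 0" "poly Q u > 0" using a Q by (auto simp: cweights_def)
          then show ?thesis using 2 by (simp add: c_def)
        next
          case 3 then have "b u \<ge> 0" "poly Q u < 0" using b Q by (auto simp: cweights_def)
          then show ?thesis using 3 by (simp add: c_def mult_nonneg_nonpos)
        qed
      qed
      have fU: "finite (S \<union> T)" using fS fT by simp
      have "(\<Sum>u\<in>S\<union>T. c u * poly Q u) \<ge> 0" using nn by (intro sum_nonneg) blast
      then have "(\<Sum>u\<in>S\<union>T. c u * poly Q u) = 0" using le by linarith
      then have z: "\<forall>u\<in>S\<union>T. c u * poly Q u = 0"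
        using nn sum_nonneg_eq_0_iff[OF fU, of "\<lambda>u. c u * poly Q u"] by simp
      have a0: "\<forall>u\<in>S-T. a u = 0"
      proof
        fix u assume u: "u \<in> S - T"
        then have "poly Q u > 0" using Q by auto
        moreover have "c u * poly Q u = 0" using z u by auto
        ultimately show "a u = 0" using u by (simp add: c_def)
      qed
      have rs: "(\<Sum>t\<in>S. a t * g t) = (\<Sum>t\<in>S\<inter>T. a t * g t)" for g
      proof (rule sum.mono_neutral_right)
        show "finite S" by (rule fS)
        show "S \<inter> T \<subseteq> S" by blast
        show "\<forall>i\<in>S - S \<inter> T. a i * g i = 0" using a0 by simp
      qed
      have "(\<Sum>t\<in>S\<inter>T. a t) = 1" using rs[of "\<lambda>_. 1"] a(1) by (simp add: cweights_def)
      moreover have "\<forall>t\<in>S\<inter>T. 0 \<le> a t" using a(1) by (simp add: cweights_def)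
      ultimately have cw: "cweights (S \<inter> T) a" by (simp add: cweights_def)
      have ge: "G d S a = G d (S \<inter> T) a" unfolding G_def by (rule ext, rule rs)
      have "p \<in> sconv d (S \<inter> T)" unfolding sconv_iff using cw ge a(2) by blast
      then show False using p by blast
    qed
    show "alt (d+2) T S \<and> \<not> alt (d+2) S T" using n1 n2 by blast
  next
    assume asm: "alt (d+2) T S \<and> \<not> alt (d+2) S T"
    have ov: "overlap d S T"
    proof -
      obtain a b where a: "cweights T a" and b: "cweights S b"
        and m: "\<forall>i<d. (\<Sum>t\<in>T. a t * t ^ Suc i) = (\<Sum>t\<in>S. b t * t ^ Suc i)"
        and u: "\<exists>u\<in>S. b u > 0 \<and> a u = 0"
      proof -
        have "alt (d+2) T S" using asm by blast
        from cons[OF T S this] show ?thesis using that by blast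
      qed
      obtain u where u: "u \<in> S" "b u > 0" "a u = 0" using u by blast
      have g: "G d T a = G d S b" by (rule G_eqI[OF m])
      define p where "p = G d S b"
      have "p \<in> sconv d S" unfolding sconv_iff p_def using b by blast
      moreover have "p \<in> sconv d T" unfolding sconv_iff p_def using a g by (intro exI[of _ a]) simp
      ultimately have pin: "p \<in> sconv d S \<inter> sconv d T" by blast
      have "p \<notin> sconv d (S \<inter> T)"
      proof
        assume "p \<in> sconv d (S \<inter> T)"
        then obtain w where w: "cweights (S \<inter> T) w" "p = G d (S \<inter> T) w" unfolding sconv_iff by blast
        have w': "cweights (T \<inter> S) w" "p = G d (T \<inter> S) w" proof -
          have "T \<inter> S = S \<inter> T" by blast
          then show "cweights (T \<inter> S) w" "p = G d (T \<inter> S) w" using w by simp_all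
        qed
        note e1 = ext_weights[OF fS w(1), of d]
        note e2 = ext_weights[OF fT w'(1), of d]
        have "G d S b = G d S (\<lambda>x. if x \<in> T then w x else 0)"
          using conjunct2[OF e1] w(2) unfolding p_def by simp
        then have "\<forall>t\<in>S. b t = (if t \<in> T then w t else 0)"
          using uniqG[OF S b conjunct1[OF e1]] by blast
        then have uT: "u \<in> T" and wu: "w u > 0" using u by (auto split: if_splits)
        have "G d T a = G d T (\<lambda>x. if x \<in> S then w x else 0)"
          using conjunct2[OF e2] w'(2) g unfolding p_def by simp
        then have "\<forall>t\<in>T. a t = (if t \<in> S then w t else 0)"
          using uniqG[OF T a conjunct1[OF e2]] by blast
        then have "a u = w u" using uT u by simp
        then show False using u wu by simp
      qed
      then show ?thesis using pin sub unfolding overlap_def by blast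
    qed
    have "\<not> alt (Suc (d+1)) S T" using asm by simp
    from greedy[OF fS fT this] obtain Q :: "real poly" where Q: "degree Q = d+1" "coeff Q (d+1) = 1"
      "\<forall>u\<in>S\<inter>T. poly Q u = 0" "\<forall>u\<in>S-T. poly Q u < 0" "\<forall>u\<in>T-S. poly Q u > 0" by blast
    have "height d S p \<le> height d T p" if p: "p \<in> sconv d S \<inter> sconv d T" for p
    proof -
      obtain a b where a: "cweights S a" "p = G d S a" and b: "cweights T b" "p = G d T b"
        using p unfolding Int_iff sconv_iff by blast
      have m: "\<forall>i<d. (\<Sum>t\<in>S. a t * t ^ Suc i) = (\<Sum>t\<in>T. b t * t ^ Suc i)"
        using G_mom a b by metis
      define c where "c u = (if u \<in> S then a u else 0) - (if u \<in> T then b u else 0)" for u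
      have ks: "(\<Sum>u\<in>S\<union>T. c u * poly Q u) = height d S p - height d T p"
        using key[OF S T a(1) b(1) m Q(1,2)] height_eq[OF S a(1)] height_eq[OF T b(1)] a(2) b(2)
        unfolding c_def by simp
      have "(\<Sum>u\<in>S\<union>T. c u * poly Q u) \<le> 0"
      proof (rule sum_nonpos)
        fix u assume u: "u \<in> S \<union> T"
        consider "u \<in> S \<inter> T" | "u \<in> S - T" | "u \<in> T - S" using u by blast
        then show "c u * poly Q u \<le> 0"
        proof cases
          case 1 then show ?thesis using Q by auto
        next
          case 2 then have "a u \<ge> 0" "poly Q u < 0" using a Q by (auto simp: cweights_def)
          then show ?thesis using 2 by (simp add: c_def mult_nonneg_nonpos)
        next
          case 3 then have "b u \<ge> 0" "poly Q u > 0" using b Q by (auto simp: cweights_def)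
          then show ?thesis using 3 by (simp add: c_def)
        qed
      qed
      then show ?thesis using ks by simp
    qed
    then show "below d S T" using ov by (auto simp: below_def)
  qed
qed

lemma rev_seq:
  "(\<exists>v::nat\<Rightarrow>real. (\<forall>i j. i < j \<and> j < k \<longrightarrow> v i < v j) \<and> (\<forall>i<k. v i \<in> F i)) \<longleftrightarrow>
   (\<exists>w::nat\<Rightarrow>real. (\<forall>i j. i < j \<and> j < k \<longrightarrow> w j < w i) \<and> (\<forall>i<k. w i \<in> F (k - 1 - i)))"
proof
  assume "\<exists>v. (\<forall>i j. i < j \<and> j < k \<longrightarrow> v i < v j) \<and> (\<forall>i<k. v i \<in> F i)"
  then obtain v where v: "\<forall>i j. i < j \<and> j < k \<longrightarrow> v i < v j" "\<forall>i<k. v i \<in> F i" by blast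
  show "\<exists>w. (\<forall>i j. i < j \<and> j < k \<longrightarrow> w j < w i) \<and> (\<forall>i<k. w i \<in> F (k - 1 - i))"
  proof (intro exI[of _ "\<lambda>i. v (k - 1 - i)"] conjI allI impI)
    fix i j assume "i < j \<and> j < k"
    then have "k - 1 - j < k - 1 - i" "k - 1 - i < k" by auto
    then show "v (k - 1 - j) < v (k - 1 - i)" using v(1) by blast
  next
    fix i assume "i < k" then show "v (k - 1 - i) \<in> F (k - 1 - i)" using v(2) by auto
  qed
next
  assume "\<exists>w. (\<forall>i j. i < j \<and> j < k \<longrightarrow> w j < w i) \<and> (\<forall>i<k. w i \<in> F (k - 1 - i))"
  then obtain w where w: "\<forall>i j. i < j \<and> j < k \<longrightarrow> w j < w i" "\<forall>i<k. w i \<in> F (k - 1 - i)" by blast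
  show "\<exists>v. (\<forall>i j. i < j \<and> j < k \<longrightarrow> v i < v j) \<and> (\<forall>i<k. v i \<in> F i)"
  proof (intro exI[of _ "\<lambda>i. w (k - 1 - i)"] conjI allI impI)
    fix i j assume "i < j \<and> j < k"
    then have "k - 1 - j < k - 1 - i" "k - 1 - i < k" by auto
    then show "w (k - 1 - i) < w (k - 1 - j)" using w(1) by blast
  next
    fix i assume i: "i < k"
    then have "k - 1 - (k - 1 - i) = i" "k - 1 - i < k" by auto
    then show "w (k - 1 - i) \<in> F i" using w(2) by metis
  qed
qed

lemma interlace_alt:
  "interlace_from (d+2) X Y \<longleftrightarrow> (if odd d then alt (d+2) X Y else alt (d+2) Y X)"
proof -
  have par: "i < d + 2 \<Longrightarrow> even (d + 2 - 1 - i) \<longleftrightarrow> (even i \<longleftrightarrow> odd d)" for i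
    by presburger
  have "interlace_from (d+2) X Y \<longleftrightarrow>
     (\<exists>w::nat\<Rightarrow>real. (\<forall>i j. i < j \<and> j < d+2 \<longrightarrow> w j < w i) \<and>
        (\<forall>i<d+2. w i \<in> (if even (d + 2 - 1 - i) then X else Y)))"
    unfolding interlace_from_def by (rule rev_seq)
  also have "\<dots> \<longleftrightarrow> (\<exists>w::nat\<Rightarrow>real. (\<forall>i j. i < j \<and> j < d+2 \<longrightarrow> w j < w i) \<and>
        (\<forall>i<d+2. w i \<in> (if odd d then (if even i then X else Y) else (if even i then Y else X))))"
    using par by (intro ex_cong1 conj_cong refl all_cong1 imp_cong) auto
  also have "\<dots> \<longleftrightarrow> (if odd d then alt (d+2) X Y else alt (d+2) Y X)"
    unfolding alt_def by (cases "odd d") auto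
  finally show ?thesis .
qed

theorem proposition2p4:
  fixes d :: nat and S T :: "real set"
  assumes "1 \<le> d" and "simplex_on d S" and "simplex_on d T"
  shows "below d S T \<longleftrightarrow>
    (if even d then interlace_from (d+2) S T \<and> \<not> interlace_from (d+2) T S
     else interlace_from (d+2) T S \<and> \<not> interlace_from (d+2) S T)"
  using main_alt[OF assms(2,3)] interlace_alt[of d S T] interlace_alt[of d T S] by auto

end
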